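(* Let $A\in\mathbb{R}^{m\times n}$ with $m<n$, let $B$ be a matrix whose columns form a basis of the null space of $A$, let $T\subseteq\{1,\dots,n\}$ and let $\sigma\in\{-1,+1\}^T$ be a fixed sign pattern. Then every $\mathbf{x}\in\mathbb{R}^n$ with support exactly $T$ and $\operatorname{sgn}(x_i)=\sigma_i$ for $i\in T$ is the unique solution of the $\ell_0$-minimization problem $\min\{\|\mathbf{v}\|_0 : A\mathbf{v}=A\mathbf{x}\}$ if and only if $$\|B_{T^-}\mathbf{z}\|_0<\|B_{T^c}\mathbf{z}\|_0$$ for every nonzero vector $\mathbf{z}$, where $T^-=\{i\in T:(B\mathbf{z})_i\sigma_i<0\}$.
   Context: $\|\mathbf{v}\|_0=|\{i:v_i\neq0\}|$. For an index set $S$, $B_S$ is the submatrix of $B$ formed by rows indexed by $S$; $T^c=\{1,\dots,n\}\setminus T$. *)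

theory Defs
  imports "HOL-Analysis.Analysis"
begin

definition l0 :: "real ^ 'n \<Rightarrow> nat" where
  "l0 v = card {i. v $ i \<noteq> 0}"

text \<open>l0 norm of the subvector of v indexed by S (i.e. of the rows of B z indexed by S).\<close>
definition l0_sub :: "'n set \<Rightarrow> real ^ 'n \<Rightarrow> nat" where
  "l0_sub S v = card {i \<in> S. v $ i \<noteq> 0}"

end

theory Submission imports Defs begin
lemma colsum: "B *v z = (\<Sum>j\<in>UNIV. (z$j) *\<^sub>R column j B)" for B :: "real^'k^'n"
  by (simp add: matrix_mult_sum scalar_mult_eq_scaleR)

lemma Bz_zero:
  fixes B :: "real ^ 'k ^ 'n"
  assumes inj: "inj (\<lambda>j. column j B)" and ind: "independent (columns B)" and h: "B *v z = 0"
  shows "z = 0"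
proof -
  have cols: "columns B = range (\<lambda>j. column j B)" by (auto simp: columns_def)
  define c where "c v = z $ (inv (\<lambda>j. column j B) v)" for v
  have "(\<Sum>v\<in>columns B. c v *\<^sub>R v) = (\<Sum>j\<in>UNIV. c (column j B) *\<^sub>R column j B)"
    unfolding cols by (subst sum.reindex[OF inj]) simp
  also have "\<dots> = B *v z" using inj by (simp add: colsum c_def inv_f_f[OF inj])
  finally have "(\<Sum>v\<in>columns B. c v *\<^sub>R v) = 0" using h by simp
  then have "\<forall>v\<in>columns B. c v = 0" using ind independent_explicit by blast
  then show ?thesis using inj by (auto simp: vec_eq_iff cols c_def inv_f_f[OF inj])
qed

lemma null_range:
  fixes B :: "real ^ 'k ^ 'n"
  assumes inj: "inj (\<lambda>j. column j B)" and w: "w \<in> span (columns B)"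
  shows "\<exists>z. w = B *v z"
proof -
  have cols: "columns B = range (\<lambda>j. column j B)" by (auto simp: columns_def)
  have fin: "finite (columns B)" unfolding cols by simp
  obtain u where u: "w = (\<Sum>v\<in>columns B. u v *\<^sub>R v)" using w span_finite[OF fin] by auto
  also have "\<dots> = (\<Sum>j\<in>UNIV. u (column j B) *\<^sub>R column j B)"
    unfolding cols by (subst sum.reindex[OF inj]) simp
  also have "\<dots> = B *v (\<chi> j. u (column j B))" by (simp add: colsum)
  finally show ?thesis by blast
qed

lemma l0_split: "l0 v = l0_sub T v + l0_sub (UNIV - T) v"
proof -
  have "{i. v $ i \<noteq> 0} = {i\<in>T. v $ i \<noteq> 0} \<union> {i\<in>UNIV - T. v $ i \<noteq> 0}" by auto
  then show ?thesis unfolding l0_def l0_sub_def by (simp add: card_Un_disjoint disjoint_iff)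
qed

lemma card_T_split: "card T = l0_sub T v + card {i\<in>T. v $ i = 0}" for T :: "'n::finite set"
proof -
  have "T = {i\<in>T. v $ i \<noteq> 0} \<union> {i\<in>T. v $ i = 0}" by auto
  then have "card T = card ({i\<in>T. v $ i \<noteq> 0} \<union> {i\<in>T. v $ i = 0})" by simp
  also have "\<dots> = l0_sub T v + card {i\<in>T. v $ i = 0}"
    unfolding l0_sub_def by (rule card_Un_disjoint) auto
  finally show ?thesis .
qed

theorem theorem4:
  fixes A :: "real ^ 'n ^ 'm" and B :: "real ^ 'k ^ 'n"
    and T :: "'n set" and \<sigma> :: "'n \<Rightarrow> real"
  assumes mn: "CARD('m) < CARD('n)"
    and B_inj: "inj (\<lambda>j. column j B)"
    and B_indep: "independent (columns B)"
    and B_span: "span (columns B) = {v. A *v v = 0}"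
    and sigma: "\<forall>i\<in>T. \<sigma> i \<in> {-1, 1}"
  shows "(\<forall>x :: real ^ 'n. {i. x $ i \<noteq> 0} = T \<and> (\<forall>i\<in>T. sgn (x $ i) = \<sigma> i) \<longrightarrow>
            (\<forall>v. A *v v = A *v x \<and> v \<noteq> x \<longrightarrow> l0 x < l0 v))
      \<longleftrightarrow>
         (\<forall>z :: real ^ 'k. z \<noteq> 0 \<longrightarrow>
            l0_sub {i \<in> T. (B *v z) $ i * \<sigma> i < 0} (B *v z) < l0_sub (UNIV - T) (B *v z))"
proof
  assume L: "\<forall>x :: real ^ 'n. {i. x $ i \<noteq> 0} = T \<and> (\<forall>i\<in>T. sgn (x $ i) = \<sigma> i) \<longrightarrow>
            (\<forall>v. A *v v = A *v x \<and> v \<noteq> x \<longrightarrow> l0 x < l0 v)"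
  show "\<forall>z :: real ^ 'k. z \<noteq> 0 \<longrightarrow>
            l0_sub {i \<in> T. (B *v z) $ i * \<sigma> i < 0} (B *v z) < l0_sub (UNIV - T) (B *v z)"
  proof (intro allI impI)
    fix z :: "real ^ 'k" assume z: "z \<noteq> 0"
    define w where "w = B *v z"
    define Tm where "Tm = {i \<in> T. w $ i * \<sigma> i < 0}"
    have w0: "w \<noteq> 0" using Bz_zero[OF B_inj B_indep, of z] z w_def by auto
    have Aw: "A *v w = 0" using B_span matrix_vector_mult_in_columnspace[of B z] w_def by auto
    define x :: "real ^ 'n" where "x = (\<chi> i. if i \<in> Tm then - (w $ i) else if i \<in> T then \<sigma> i else 0)"
    have suppx: "{i. x $ i \<noteq> 0} = T"
    proof -
      have "x $ i \<noteq> 0 \<longleftrightarrow> i \<in> T" for i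
        using sigma by (auto simp: x_def Tm_def)
      then show ?thesis by auto
    qed
    have sgnx: "\<forall>i\<in>T. sgn (x $ i) = \<sigma> i"
    proof
      fix i assume i: "i \<in> T"
      show "sgn (x $ i) = \<sigma> i"
      proof (cases "i \<in> Tm")
        case True
        then have "w $ i * \<sigma> i < 0" by (simp add: Tm_def)
        moreover have "\<sigma> i = -1 \<or> \<sigma> i = 1" using sigma i by auto
        ultimately show ?thesis using True by (auto simp: x_def sgn_if mult_less_0_iff)
      next
        case False
        have "\<sigma> i = -1 \<or> \<sigma> i = 1" using sigma i by auto
        then show ?thesis using False i by (auto simp: x_def)
      qed
    qed
    define v where "v = x + w"
    have Av: "A *v v = A *v x" using Aw by (simp add: v_def matrix_vector_right_distrib)
    have vx: "v \<noteq> x" using w0 by (simp add: v_def)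
    have lt: "l0 x < l0 v" using L suppx sgnx Av vx by blast
    have l0x: "l0 x = card T" using suppx by (simp add: l0_def)
    have sub1: "Tm \<subseteq> {i\<in>T. v $ i = 0}"
      by (auto simp: Tm_def v_def x_def)
    have c1: "card Tm \<le> card {i\<in>T. v $ i = 0}" by (rule card_mono[OF _ sub1]) simp
    have e2: "l0_sub (UNIV - T) v = l0_sub (UNIV - T) w"
    proof -
      have "{i \<in> UNIV - T. v $ i \<noteq> 0} = {i \<in> UNIV - T. w $ i \<noteq> 0}"
        using suppx by (auto simp: v_def)
      then show ?thesis by (simp add: l0_sub_def)
    qed
    have e3: "l0_sub Tm w = card Tm"
    proof -
      have "{i \<in> Tm. w $ i \<noteq> 0} = Tm" by (auto simp: Tm_def)
      then show ?thesis by (simp add: l0_sub_def)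
    qed
    have "card T = l0_sub T v + card {i\<in>T. v $ i = 0}" by (rule card_T_split)
    then show "l0_sub {i \<in> T. (B *v z) $ i * \<sigma> i < 0} (B *v z) < l0_sub (UNIV - T) (B *v z)"
      using lt l0x c1 e2 e3 l0_split[of v T] unfolding Tm_def[symmetric] w_def[symmetric] by linarith
  qed
next
  assume R: "\<forall>z :: real ^ 'k. z \<noteq> 0 \<longrightarrow>
            l0_sub {i \<in> T. (B *v z) $ i * \<sigma> i < 0} (B *v z) < l0_sub (UNIV - T) (B *v z)"
  show "\<forall>x :: real ^ 'n. {i. x $ i \<noteq> 0} = T \<and> (\<forall>i\<in>T. sgn (x $ i) = \<sigma> i) \<longrightarrow>
            (\<forall>v. A *v v = A *v x \<and> v \<noteq> x \<longrightarrow> l0 x < l0 v)"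
  proof (intro allI impI)
    fix x v :: "real ^ 'n"
    assume hx: "{i. x $ i \<noteq> 0} = T \<and> (\<forall>i\<in>T. sgn (x $ i) = \<sigma> i)"
      and hv: "A *v v = A *v x \<and> v \<noteq> x"
    define w where "w = v - x"
    have "A *v w = 0" using hv by (simp add: w_def matrix_vector_mult_diff_distrib)
    then have "w \<in> span (columns B)" using B_span by auto
    then obtain z where wz: "w = B *v z" using null_range[OF B_inj] by blast
    have z: "z \<noteq> 0" using hv wz w_def by auto
    define Tm where "Tm = {i \<in> T. w $ i * \<sigma> i < 0}"
    have r: "l0_sub Tm w < l0_sub (UNIV - T) w" using R z wz Tm_def by blast
    have l0x: "l0 x = card T" using hx by (simp add: l0_def)
    have sub1: "{i\<in>T. v $ i = 0} \<subseteq> {i \<in> Tm. w $ i \<noteq> 0}"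
    proof
      fix i assume i: "i \<in> {i\<in>T. v $ i = 0}"
      then have xi: "x $ i \<noteq> 0" "sgn (x $ i) = \<sigma> i" using hx by auto
      have wi: "w $ i = - x $ i" using i by (simp add: w_def)
      have "w $ i * \<sigma> i = - (x $ i * sgn (x $ i))" using wi xi by simp
      also have "\<dots> < 0" using xi(1) by (simp add: sgn_if)
      finally show "i \<in> {i \<in> Tm. w $ i \<noteq> 0}" using i xi wi by (auto simp: Tm_def)
    qed
    have c1: "card {i\<in>T. v $ i = 0} \<le> l0_sub Tm w"
      unfolding l0_sub_def by (rule card_mono[OF _ sub1]) simp
    have e2: "l0_sub (UNIV - T) v = l0_sub (UNIV - T) w"
    proof -
      have "{i \<in> UNIV - T. v $ i \<noteq> 0} = {i \<in> UNIV - T. w $ i \<noteq> 0}"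
        using hx by (auto simp: w_def)
      then show ?thesis by (simp add: l0_sub_def)
    qed
    have "card T = l0_sub T v + card {i\<in>T. v $ i = 0}" by (rule card_T_split)
    then show "l0 x < l0 v" using l0x c1 e2 r l0_split[of v T] by linarith
  qed
qed

end
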